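(* Let $n\ge1$, $N=\{1,\dots,n\}$, $A=(a_{ij})\in[0,1]^{n\times n}$, $b=(b_1,\dots,b_n)$ with $b_i>0$, and assume $\check\alpha_j\le 1$ for all $j\in N$. Let $\lambda\in[0,+\infty)$ and $x=(x_1,\dots,x_n)\in[0,1]^n$. Then $x\in V^*(A,\lambda)$ if and only if there exists $p=(p_1,\dots,p_n)\in P$ such that $$\begin{cases} x_j=d_{0j}=1 & \text{for all } j\in N^*,\\ d_{(p_j-1)j}\le x_j\le d_{p_jj} & \text{for all } j\in N\setminus N^*,\\ \sum_{j\in N^*}a_{ij}+\sum_{j\in N\setminus N^*}\big[\gamma_{ij}\,x_j+(1-\gamma_{ij})\,a_{ij}\big]\ge b_i & \text{for all } i\in N,\\ \sum_{j\in N^*}a_{ij}+\sum_{j\in N\setminus N^*}\big[\gamma_{ij}\,x_j+(1-\gamma_{ij})\,a_{ij}\big]=\lambda x_i & \text{for all } i\in N,\end{cases}$$ where $\gamma_{ij}$ (depending on $p$) is as defined in the context.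
   Context: $\theta=(0,\dots,0)$. For $x\in[0,1]^n$, write $(A\odot x^T)_i=\sum_{j\in N}\min\{a_{ij},x_j\}$ (ordinary addition). $V^*(A,\lambda)=\{x\in[0,1]^n: (A\odot x^T)_i\ge b_i \text{ and } (A\odot x^T)_i=\lambda x_i \text{ for all } i\in N,\ x\neq\theta\}$ (constrained eigenvectors). Let $\check\alpha_j=\max\big(\{0\}\cup\{b_i-\sum_{k\in N\setminus\{j\}}a_{ik}: i\in N\}\big)$. For $j\in N$, let $D_j=\{d_{0j}<d_{1j}<\dots<d_{l_jj}\}$ be the set $\{\check\alpha_j\}\cup\{a_{ij}: i\in N,\ a_{ij}\ge\check\alpha_j\}\cup\{1\}$ listed increasingly, so $d_{0j}=\check\alpha_j$, $d_{l_jj}=1$, each $d_{pj}$ with $0<p<l_j$ is some $a_{ij}$, and every $a_{ij}\ge\check\alpha_j$ equals some $d_{pj}$. Let $N^*=\{j\in N:\check\alpha_j=1\}$; let $P_j=\{0\}$ if $j\in N^*$ and $P_j=\{p: d_{pj}\in D_j,\ d_{pj}>\check\alpha_j\}=\{1,\dots,l_j\}$ if $j\in N\setminus N^*$; $P=P_1\times\dots\times P_n$. For $p\in P$, $i\in N$, $j\in N\setminus N^*$: $\gamma_{ij}=1$ if $d_{p_jj}\le a_{ij}$ and $\gamma_{ij}=0$ if $a_{ij}\le d_{(p_j-1)j}$. *)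

theory Defs
  imports Main "HOL.Real"
begin

text \<open>Index set N = {0..<n} (0-based relabelling of {1..n}).
 Matrices: nat => nat => real, vectors: nat => real, only entries with indices < n matter.\<close>

definition maxmin_prod :: "nat \<Rightarrow> (nat \<Rightarrow> nat \<Rightarrow> real) \<Rightarrow> (nat \<Rightarrow> real) \<Rightarrow> nat \<Rightarrow> real" where
  "maxmin_prod n A x i = (\<Sum>j<n. min (A i j) (x j))"

definition V_star :: "nat \<Rightarrow> (nat \<Rightarrow> nat \<Rightarrow> real) \<Rightarrow> (nat \<Rightarrow> real) \<Rightarrow> real \<Rightarrow> (nat \<Rightarrow> real) set" where
  "V_star n A b lam = {x. (\<forall>j<n. 0 \<le> x j \<and> x j \<le> 1)
      \<and> (\<forall>i<n. maxmin_prod n A x i \<ge> b i \<and> maxmin_prod n A x i = lam * x i)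
      \<and> (\<exists>j<n. x j \<noteq> 0)}"

definition alpha_check :: "nat \<Rightarrow> (nat \<Rightarrow> nat \<Rightarrow> real) \<Rightarrow> (nat \<Rightarrow> real) \<Rightarrow> nat \<Rightarrow> real" where
  "alpha_check n A b j = Max ({0} \<union> {b i - (\<Sum>k\<in>{..<n} - {j}. A i k) | i. i < n})"

definition Dset :: "nat \<Rightarrow> (nat \<Rightarrow> nat \<Rightarrow> real) \<Rightarrow> (nat \<Rightarrow> real) \<Rightarrow> nat \<Rightarrow> real set" where
  "Dset n A b j = {alpha_check n A b j} \<union> {A i j | i. i < n \<and> A i j \<ge> alpha_check n A b j} \<union> {1}"

definition dval :: "nat \<Rightarrow> (nat \<Rightarrow> nat \<Rightarrow> real) \<Rightarrow> (nat \<Rightarrow> real) \<Rightarrow> nat \<Rightarrow> nat \<Rightarrow> real" where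
  "dval n A b p j = sorted_list_of_set (Dset n A b j) ! p"

definition lval :: "nat \<Rightarrow> (nat \<Rightarrow> nat \<Rightarrow> real) \<Rightarrow> (nat \<Rightarrow> real) \<Rightarrow> nat \<Rightarrow> nat" where
  "lval n A b j = card (Dset n A b j) - 1"

definition Nstar :: "nat \<Rightarrow> (nat \<Rightarrow> nat \<Rightarrow> real) \<Rightarrow> (nat \<Rightarrow> real) \<Rightarrow> nat set" where
  "Nstar n A b = {j. j < n \<and> alpha_check n A b j = 1}"

definition Pset :: "nat \<Rightarrow> (nat \<Rightarrow> nat \<Rightarrow> real) \<Rightarrow> (nat \<Rightarrow> real) \<Rightarrow> (nat \<Rightarrow> nat) set" where
  "Pset n A b = {p. \<forall>j<n. (j \<in> Nstar n A b \<longrightarrow> p j = 0)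
      \<and> (j \<notin> Nstar n A b \<longrightarrow> p j \<in> {p'. dval n A b p' j \<in> Dset n A b j \<and> dval n A b p' j > alpha_check n A b j \<and> p' \<le> lval n A b j})}"

text \<open>gamma_ij: 1 if d_{p_j j} <= a_ij, and 0 otherwise (then a_ij <= d_{(p_j-1) j}).\<close>
definition gamma :: "nat \<Rightarrow> (nat \<Rightarrow> nat \<Rightarrow> real) \<Rightarrow> (nat \<Rightarrow> real) \<Rightarrow> (nat \<Rightarrow> nat) \<Rightarrow> nat \<Rightarrow> nat \<Rightarrow> real" where
  "gamma n A b p i j = (if dval n A b (p j) j \<le> A i j then 1 else 0)"

end

theory Submission
  imports Defs
begin

lemma L0:
  fixes D :: "real set"
  assumes "finite D" "a \<in> D" "\<forall>d\<in>D. a \<le> d"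
  shows "sorted_list_of_set D ! 0 = a"
proof -
  let ?L = "sorted_list_of_set D"
  have s: "sorted ?L" and st: "set ?L = D" using assms(1) by auto
  obtain k where k: "k < length ?L" "?L ! k = a" using assms(2) st by (metis in_set_conv_nth)
  have "?L ! 0 \<le> ?L ! k" using sorted_nth_mono[OF s, of 0 k] k by simp
  moreover have "?L ! 0 \<in> D" using k st by (metis gr_zeroI not_less0 nth_mem)
  ultimately show ?thesis using assms(3) k by force
qed

lemma Llast:
  fixes D :: "real set"
  assumes "finite D" "a \<in> D" "\<forall>d\<in>D. d \<le> a"
  shows "sorted_list_of_set D ! (card D - 1) = a"
proof -
  let ?L = "sorted_list_of_set D"
  have s: "sorted ?L" and st: "set ?L = D" and len: "length ?L = card D" using assms(1) by auto
  obtain k where k: "k < length ?L" "?L ! k = a" using assms(2) st by (metis in_set_conv_nth)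
  have "?L ! k \<le> ?L ! (card D - 1)" using sorted_nth_mono[OF s, of k "card D - 1"] k len by simp
  moreover have "?L ! (card D - 1) \<in> D" using k st len
    by (metis Suc_pred' bot_nat_0.extremum_strict lessI nth_mem gr_zeroI)
  ultimately show ?thesis using assms(3) k by force
qed

lemma Lbetween:
  fixes D :: "real set"
  assumes "finite D" "a \<in> D" "1 \<le> p" "p < card D" "a < sorted_list_of_set D ! p"
  shows "a \<le> sorted_list_of_set D ! (p - 1)"
proof -
  let ?L = "sorted_list_of_set D"
  have s: "sorted ?L" and st: "set ?L = D" and len: "length ?L = card D" using assms(1) by auto
  obtain k where k: "k < length ?L" "?L ! k = a" using assms(2) st by (metis in_set_conv_nth)
  show ?thesis
  proof (cases "p \<le> k")
    case True
    then have "?L ! p \<le> ?L ! k" using sorted_nth_mono[OF s, of p k] k by simp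
    then show ?thesis using assms(5) k by simp
  next
    case False
    then have "?L ! k \<le> ?L ! (p - 1)" using sorted_nth_mono[OF s, of k "p - 1"] assms len by simp
    then show ?thesis using k by simp
  qed
qed

lemma Lstrict:
  fixes D :: "real set"
  assumes "finite D" "i < j" "j < card D"
  shows "sorted_list_of_set D ! i < sorted_list_of_set D ! j"
proof -
  have "sorted_wrt (<) (sorted_list_of_set D)" using assms(1) by simp
  then show ?thesis using sorted_wrt_nth_less assms by fastforce
qed

lemma Lmono:
  fixes D :: "real set"
  assumes "finite D" "i \<le> j" "j < card D"
  shows "sorted_list_of_set D ! i \<le> sorted_list_of_set D ! j"
  using sorted_nth_mono[of "sorted_list_of_set D" i j] assms by simp

lemma Lexists:
  fixes D :: "real set"
  assumes "finite D" "al \<in> D" "\<forall>d\<in>D. al \<le> d" "1 \<in> D" "\<forall>d\<in>D. d \<le> 1" "al < 1"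
    "al \<le> t" "t \<le> 1"
  shows "\<exists>p. 1 \<le> p \<and> p \<le> card D - 1 \<and> sorted_list_of_set D ! (p - 1) \<le> t \<and> t \<le> sorted_list_of_set D ! p"
proof -
  let ?L = "sorted_list_of_set D"
  have c2: "card D \<ge> 2"
  proof -
    have "{al, 1} \<subseteq> D" using assms by auto
    then have "card {al, 1} \<le> card D" using assms(1) card_mono by blast
    then show ?thesis using assms(6) by simp
  qed
  have l0: "?L ! 0 = al" using L0 assms by blast
  have ll: "?L ! (card D - 1) = 1" using Llast assms by blast
  define q where "q = (LEAST q. q < card D \<and> t \<le> ?L ! q)"
  have ex: "card D - 1 < card D \<and> t \<le> ?L ! (card D - 1)" using ll assms c2 by simp
  have q1: "q < card D \<and> t \<le> ?L ! q" unfolding q_def by (rule LeastI, rule ex)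
  have q2: "q \<le> card D - 1" unfolding q_def by (rule Least_le, rule ex)
  show ?thesis
  proof (cases "q = 0")
    case True
    then have "t = al" using q1 l0 assms by simp
    moreover have "?L ! 0 \<le> ?L ! 1" using Lmono assms c2 by simp
    ultimately show ?thesis using l0 c2 by (intro exI[of _ 1]) auto
  next
    case False
    have "\<not> (q - 1 < card D \<and> t \<le> ?L ! (q - 1))" unfolding q_def
      using False not_less_Least q_def by (metis diff_less less_numeral_extra(1) gr_zeroI)
    then have "?L ! (q - 1) < t" using q1 by auto
    then show ?thesis using False q1 q2 by (intro exI[of _ q]) auto
  qed
qed

lemma dset_finite: "finite (Dset n A b j)"
proof -
  have "{A i j | i. i < n \<and> A i j \<ge> alpha_check n A b j} \<subseteq> (\<lambda>i. A i j) ` {..<n}" by auto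
  then show ?thesis unfolding Dset_def using finite_subset by blast
qed

lemma dset_ge: "d \<in> Dset n A b j \<Longrightarrow> alpha_check n A b j \<le> 1 \<Longrightarrow> alpha_check n A b j \<le> d"
  unfolding Dset_def by auto

lemma dset_le: "d \<in> Dset n A b j \<Longrightarrow> alpha_check n A b j \<le> 1 \<Longrightarrow> \<forall>i<n. A i j \<le> 1 \<Longrightarrow> d \<le> 1"
  unfolding Dset_def by auto

lemma dset_al: "alpha_check n A b j \<in> Dset n A b j" and dset_1: "1 \<in> Dset n A b j"
  unfolding Dset_def by auto

lemma dval0: "alpha_check n A b j \<le> 1 \<Longrightarrow> dval n A b 0 j = alpha_check n A b j"
  unfolding dval_def using L0[OF dset_finite dset_al] dset_ge by blast

lemma card_pos: "card (Dset n A b j) > 0"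
  using dset_finite dset_al by (metis card_gt_0_iff empty_iff)

lemma x_ge_alpha:
  assumes "\<forall>i<n. maxmin_prod n A x i \<ge> b i" "\<forall>i<n. \<forall>j<n. A i j \<le> 1"
    "0 \<le> x j" "j < n"
  shows "alpha_check n A b j \<le> x j"
proof -
  have fin: "finite ({0} \<union> {b i - (\<Sum>k\<in>{..<n} - {j}. A i k) | i. i < n})" by simp
  have "\<forall>y \<in> {0} \<union> {b i - (\<Sum>k\<in>{..<n} - {j}. A i k) | i. i < n}. y \<le> x j"
  proof
    fix y assume "y \<in> {0} \<union> {b i - (\<Sum>k\<in>{..<n} - {j}. A i k) | i. i < n}"
    then consider "y = 0" | i where "i < n" "y = b i - (\<Sum>k\<in>{..<n} - {j}. A i k)" by blast
    then show "y \<le> x j"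
    proof cases
      case 1 then show ?thesis using assms by simp
    next
      case (2 i)
      have "maxmin_prod n A x i = min (A i j) (x j) + (\<Sum>k\<in>{..<n} - {j}. min (A i k) (x k))"
        unfolding maxmin_prod_def using assms(4) by (simp add: sum.remove)
      also have "\<dots> \<le> x j + (\<Sum>k\<in>{..<n} - {j}. A i k)"
        by (intro add_mono sum_mono) auto
      finally show ?thesis using 2 assms(1) by force
    qed
  qed
  then show ?thesis unfolding alpha_check_def using fin by (subst Max_le_iff) auto
qed

lemma term_eq:
  assumes Ab: "\<forall>i<n. \<forall>j<n. 0 \<le> A i j \<and> A i j \<le> 1"
    and al: "alpha_check n A b j \<le> 1" and jn: "j < n" and i: "i < n"
    and p1: "1 \<le> p j" and p2: "p j < card (Dset n A b j)"
    and x1: "dval n A b (p j - 1) j \<le> x j" and x2: "x j \<le> dval n A b (p j) j"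
  shows "min (A i j) (x j) = gamma n A b p i j * x j + (1 - gamma n A b p i j) * A i j"
proof (cases "dval n A b (p j) j \<le> A i j")
  case True
  then show ?thesis unfolding gamma_def using x2 by simp
next
  case False
  have "A i j \<le> x j"
  proof (cases "alpha_check n A b j \<le> A i j")
    case True
    then have "A i j \<in> Dset n A b j" unfolding Dset_def using i by auto
    then have "A i j \<le> dval n A b (p j - 1) j" unfolding dval_def
      using Lbetween[OF dset_finite _ p1 p2] False unfolding dval_def by simp
    then show ?thesis using x1 by simp
  next
    case F2: False
    have "dval n A b 0 j \<le> dval n A b (p j - 1) j" unfolding dval_def
      using Lmono[OF dset_finite, of 0 "p j - 1"] p2 by simp
    then show ?thesis using F2 dval0[OF al] x1 by simp
  qed
  then show ?thesis unfolding gamma_def using False by simp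
qed

lemma sum_eq:
  assumes Ab: "\<forall>i<n. \<forall>j<n. 0 \<le> A i j \<and> A i j \<le> 1"
    and al: "\<forall>j<n. alpha_check n A b j \<le> 1" and i: "i < n"
    and ns: "\<forall>j \<in> Nstar n A b. x j = 1"
    and pp: "\<forall>j<n. j \<notin> Nstar n A b \<longrightarrow> 1 \<le> p j \<and> p j < card (Dset n A b j)
       \<and> dval n A b (p j - 1) j \<le> x j \<and> x j \<le> dval n A b (p j) j"
  shows "maxmin_prod n A x i = (\<Sum>j\<in>Nstar n A b. A i j)
              + (\<Sum>j\<in>{..<n} - Nstar n A b. gamma n A b p i j * x j + (1 - gamma n A b p i j) * A i j)"
proof -
  have sub: "Nstar n A b \<subseteq> {..<n}" unfolding Nstar_def by auto
  have "maxmin_prod n A x i = (\<Sum>j\<in>{..<n} - Nstar n A b. min (A i j) (x j)) + (\<Sum>j\<in>Nstar n A b. min (A i j) (x j))"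
    unfolding maxmin_prod_def using sum.subset_diff[OF sub] by blast
  also have "(\<Sum>j\<in>Nstar n A b. min (A i j) (x j)) = (\<Sum>j\<in>Nstar n A b. A i j)"
    using ns sub Ab i by (intro sum.cong) auto
  also have "(\<Sum>j\<in>{..<n} - Nstar n A b. min (A i j) (x j)) =
     (\<Sum>j\<in>{..<n} - Nstar n A b. gamma n A b p i j * x j + (1 - gamma n A b p i j) * A i j)"
  proof (rule sum.cong)
    fix j assume "j \<in> {..<n} - Nstar n A b"
    then show "min (A i j) (x j) = gamma n A b p i j * x j + (1 - gamma n A b p i j) * A i j"
      using term_eq[OF Ab _ _ i] al pp by auto
  qed simp
  finally show ?thesis by simp
qed

theorem theorem4p1:
  fixes n :: nat and A :: "nat \<Rightarrow> nat \<Rightarrow> real" and b x :: "nat \<Rightarrow> real" and lam :: real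
  assumes "n \<ge> 1"
    and "\<forall>i<n. \<forall>j<n. 0 \<le> A i j \<and> A i j \<le> 1"
    and "\<forall>i<n. b i > 0"
    and "\<forall>j<n. alpha_check n A b j \<le> 1"
    and "lam \<ge> 0"
    and "\<forall>j<n. 0 \<le> x j \<and> x j \<le> 1"
  shows "x \<in> V_star n A b lam \<longleftrightarrow>
    (\<exists>p \<in> Pset n A b.
       (\<forall>j \<in> Nstar n A b. x j = dval n A b 0 j \<and> dval n A b 0 j = 1)
     \<and> (\<forall>j<n. j \<notin> Nstar n A b \<longrightarrow> dval n A b (p j - 1) j \<le> x j \<and> x j \<le> dval n A b (p j) j)
     \<and> (\<forall>i<n. (\<Sum>j\<in>Nstar n A b. A i j)
              + (\<Sum>j\<in>{..<n} - Nstar n A b. gamma n A b p i j * x j + (1 - gamma n A b p i j) * A i j) \<ge> b i)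
     \<and> (\<forall>i<n. (\<Sum>j\<in>Nstar n A b. A i j)
              + (\<Sum>j\<in>{..<n} - Nstar n A b. gamma n A b p i j * x j + (1 - gamma n A b p i j) * A i j) = lam * x i))"
  (is "?L \<longleftrightarrow> ?R")
proof
  assume L: ?L
  then have mb: "\<forall>i<n. maxmin_prod n A x i \<ge> b i" and me: "\<forall>i<n. maxmin_prod n A x i = lam * x i"
    unfolding V_star_def by auto
  have xa: "\<forall>j<n. alpha_check n A b j \<le> x j"
    using x_ge_alpha[OF mb] assms(2,6) by blast
  have ns: "\<forall>j \<in> Nstar n A b. x j = 1 \<and> dval n A b 0 j = 1"
    using xa assms(4,6) dval0 unfolding Nstar_def by force
  have exq: "\<exists>q. 1 \<le> q \<and> q \<le> card (Dset n A b j) - 1 \<and> dval n A b (q - 1) j \<le> x j \<and> x j \<le> dval n A b q j"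
    if j: "j < n" "j \<notin> Nstar n A b" for j
  proof -
    have a1: "alpha_check n A b j < 1" using j assms(4) unfolding Nstar_def by force
    show ?thesis unfolding dval_def
      apply (rule Lexists[OF dset_finite dset_al _ dset_1 _ a1])
      using dset_ge dset_le assms j xa a1 by auto
  qed
  define p where "p j = (if j < n \<and> j \<notin> Nstar n A b then (SOME q. 1 \<le> q \<and> q \<le> card (Dset n A b j) - 1 \<and> dval n A b (q - 1) j \<le> x j \<and> x j \<le> dval n A b q j) else 0)" for j
  have pp: "1 \<le> p j \<and> p j \<le> card (Dset n A b j) - 1 \<and> dval n A b (p j - 1) j \<le> x j \<and> x j \<le> dval n A b (p j) j"
    if j: "j < n" "j \<notin> Nstar n A b" for j
    unfolding p_def using j someI_ex[OF exq[OF j]] by simp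
  have pp2: "\<forall>j<n. j \<notin> Nstar n A b \<longrightarrow> 1 \<le> p j \<and> p j < card (Dset n A b j)
       \<and> dval n A b (p j - 1) j \<le> x j \<and> x j \<le> dval n A b (p j) j"
    using pp card_pos by (metis One_nat_def Suc_pred le_imp_less_Suc)
  have inP: "p \<in> Pset n A b"
    unfolding Pset_def
  proof (clarify, intro conjI impI)
    fix j assume "j < n" "j \<in> Nstar n A b" then show "p j = 0" unfolding p_def by simp
  next
    fix j assume j: "j < n" "j \<notin> Nstar n A b"
    have "p j < card (Dset n A b j)" using pp2 j by blast
    then show "p j \<in> {p'. dval n A b p' j \<in> Dset n A b j \<and> alpha_check n A b j < dval n A b p' j \<and> p' \<le> lval n A b j}"
      using pp2 j Lstrict[OF dset_finite, of 0 "p j" n A b j] dval0[of n A b j] assms(4)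
      unfolding lval_def dval_def
      by (auto simp: dset_finite intro!: nth_mem[of "p j" "sorted_list_of_set (Dset n A b j)", simplified])
  qed
  have se: "\<forall>i<n. maxmin_prod n A x i = (\<Sum>j\<in>Nstar n A b. A i j)
              + (\<Sum>j\<in>{..<n} - Nstar n A b. gamma n A b p i j * x j + (1 - gamma n A b p i j) * A i j)"
    using sum_eq[OF assms(2,4) _ _ pp2] ns by blast
  show ?R
    apply (rule bexI[OF _ inP])
    using ns pp2 se mb me by auto
next
  assume ?R
  then obtain p where inP: "p \<in> Pset n A b"
    and ns: "\<forall>j \<in> Nstar n A b. x j = dval n A b 0 j \<and> dval n A b 0 j = 1"
    and px: "\<forall>j<n. j \<notin> Nstar n A b \<longrightarrow> dval n A b (p j - 1) j \<le> x j \<and> x j \<le> dval n A b (p j) j"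
    and rest: "\<forall>i<n. (\<Sum>j\<in>Nstar n A b. A i j)
              + (\<Sum>j\<in>{..<n} - Nstar n A b. gamma n A b p i j * x j + (1 - gamma n A b p i j) * A i j) \<ge> b i"
      "\<forall>i<n. (\<Sum>j\<in>Nstar n A b. A i j)
              + (\<Sum>j\<in>{..<n} - Nstar n A b. gamma n A b p i j * x j + (1 - gamma n A b p i j) * A i j) = lam * x i"
    by blast
  have pp2: "\<forall>j<n. j \<notin> Nstar n A b \<longrightarrow> 1 \<le> p j \<and> p j < card (Dset n A b j)
       \<and> dval n A b (p j - 1) j \<le> x j \<and> x j \<le> dval n A b (p j) j"
  proof (intro allI impI conjI)
    fix j assume j: "j < n" "j \<notin> Nstar n A b"
    then have P: "alpha_check n A b j < dval n A b (p j) j" "p j \<le> lval n A b j"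
      using inP unfolding Pset_def by auto
    show "1 \<le> p j"
    proof (rule ccontr)
      assume "\<not> 1 \<le> p j" then have "p j = 0" by simp
      then show False using P dval0[of n A b j] assms(4) j by simp
    qed
    show "p j < card (Dset n A b j)" using P(2) card_pos[of n A b j] unfolding lval_def by linarith
  qed (use px in auto)
  have se: "\<forall>i<n. maxmin_prod n A x i = (\<Sum>j\<in>Nstar n A b. A i j)
              + (\<Sum>j\<in>{..<n} - Nstar n A b. gamma n A b p i j * x j + (1 - gamma n A b p i j) * A i j)"
    using sum_eq[OF assms(2,4) _ _ pp2] ns by auto
  have nz: "\<exists>j<n. x j \<noteq> 0"
  proof (rule ccontr)
    assume "\<not> (\<exists>j<n. x j \<noteq> 0)"
    then have "maxmin_prod n A x 0 = 0" unfolding maxmin_prod_def using assms(2,1)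
      by (intro sum.neutral) auto
    then show False using se rest(1) assms(1,3) by force
  qed
  show ?L unfolding V_star_def using assms(6) se rest nz by auto
qed

end
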